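(* Let $\Sigma$ be a dec-DNNF circuit whose root is an $\wedge$-node with exactly two children $u$ and $w$, and let $S\subseteq \textit{IP}(\Sigma)$. Let $S_u=\{t_{var(\Sigma_u)} \mid t\in S\}$ and $S_w=\{t_{var(\Sigma_w)}\mid t\in S\}$. Then $S_u\subseteq \textit{IP}(\Sigma_u)$ and $S_w\subseteq\textit{IP}(\Sigma_w)$, and $S=\textit{IP}(\Sigma)$ if and only if $S_u=\textit{IP}(\Sigma_u)$, $S_w=\textit{IP}(\Sigma_w)$, and $S=\{t_u\wedge t_w \mid t_u\in S_u,\ t_w\in S_w\}$.
   Context: A term is a conjunction of literals (possibly the empty term $t_\emptyset$, equivalent to true). A term $t$ is an implicant of $f$ if $t\models f$, and prime if no term obtained by deleting a literal from $t$ is an implicant. $\textit{IP}(\cdot)$ denotes the set of prime implicants of the function computed by a circuit. A dec-DNNF circuit is a rooted DAG whose leaves are labelled $0$, $1$ or a literal and whose internal nodes are decision nodes (labelled by a variable $x$, with 0-child $u$ and 1-child $w$, computing $(\overline{x}\wedge f_u)\vee(x\wedge f_w)$) or $\wedge$-nodes whose children's subcircuits mention pairwise disjoint sets of variables. For a node $v$, $\Sigma_v$ is the subcircuit rooted at $v$ and $var(\Sigma_v)$ is the set of variables labelling leaves below $v$. For a term $t$ and a set of variables $X$, $t_X$ is the term consisting of the literals of $t$ whose variable is in $X$ (the empty term if there is none). *)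

theory Defs
  imports Main
begin

text \<open>dec-DNNF circuits (represented as trees: sharing in the DAG does not affect the
  computed functions or variable sets).\<close>

datatype 'v circuit =
    CFalse
  | CTrue
  | Lit 'v bool
  | Dec 'v "'v circuit" "'v circuit"
  | And "'v circuit list"

fun eval :: "'v circuit \<Rightarrow> ('v \<Rightarrow> bool) \<Rightarrow> bool" where
  "eval CFalse a = False"
| "eval CTrue a = True"
| "eval (Lit x b) a = (a x = b)"
| "eval (Dec x u w) a = ((\<not> a x \<and> eval u a) \<or> (a x \<and> eval w a))"
| "eval (And cs) a = (\<forall>c\<in>set cs. eval c a)"

text \<open>Variables of a circuit. A decision node on x stands for the subcircuit
  (not x and u) or (x and w), whose leaves include the literals on x, so x is counted.\<close>
fun vars :: "'v circuit \<Rightarrow> 'v set" where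
  "vars CFalse = {}"
| "vars CTrue = {}"
| "vars (Lit x b) = {x}"
| "vars (Dec x u w) = {x} \<union> vars u \<union> vars w"
| "vars (And cs) = (\<Union>c\<in>set cs. vars c)"

fun decDNNF :: "'v circuit \<Rightarrow> bool" where
  "decDNNF CFalse = True"
| "decDNNF CTrue = True"
| "decDNNF (Lit x b) = True"
| "decDNNF (Dec x u w) = (decDNNF u \<and> decDNNF w)"
| "decDNNF (And cs) = ((\<forall>c\<in>set cs. decDNNF c) \<and>
     (\<forall>i<length cs. \<forall>j<length cs. i \<noteq> j \<longrightarrow> vars (cs ! i) \<inter> vars (cs ! j) = {}))"

type_synonym 'v "term" = "('v \<times> bool) set"

definition is_term :: "'v term \<Rightarrow> bool" where
  "is_term t \<longleftrightarrow> finite t \<and> \<not> (\<exists>x. (x, True) \<in> t \<and> (x, False) \<in> t)"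

definition sat_term :: "('v \<Rightarrow> bool) \<Rightarrow> 'v term \<Rightarrow> bool" where
  "sat_term a t \<longleftrightarrow> (\<forall>(x, b)\<in>t. a x = b)"

definition implicant :: "'v term \<Rightarrow> 'v circuit \<Rightarrow> bool" where
  "implicant t C \<longleftrightarrow> is_term t \<and> (\<forall>a. sat_term a t \<longrightarrow> eval C a)"

definition prime_implicant :: "'v term \<Rightarrow> 'v circuit \<Rightarrow> bool" where
  "prime_implicant t C \<longleftrightarrow> implicant t C \<and> (\<forall>l\<in>t. \<not> implicant (t - {l}) C)"

definition IP :: "'v circuit \<Rightarrow> 'v term set" where
  "IP C = {t. prime_implicant t C}"

definition restrict_term :: "'v term \<Rightarrow> 'v set \<Rightarrow> 'v term" where
  "restrict_term t X = {l \<in> t. fst l \<in> X}"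

end

theory Submission
  imports Defs
begin

lemma eval_agree: "(\<forall>x\<in>vars c. a x = b x) \<Longrightarrow> eval c a = eval c b"
  by (induction c) auto

lemma finite_vars: "finite (vars c)"
  by (induction c) auto

lemma disj_uw: "decDNNF (And [u, w]) \<Longrightarrow> vars u \<inter> vars w = {}"
proof -
  assume "decDNNF (And [u, w])"
  then have "\<forall>i<length [u,w]. \<forall>j<length [u,w]. i \<noteq> j \<longrightarrow> vars ([u,w] ! i) \<inter> vars ([u,w] ! j) = {}"
    unfolding decDNNF.simps by (rule conjunct2)
  from this[rule_format, of 0 1] show ?thesis by simp
qed

lemma term_subset: "is_term t \<Longrightarrow> s \<subseteq> t \<Longrightarrow> is_term s"
  unfolding is_term_def by (meson finite_subset subsetD)

lemma prime_vars:
  assumes "prime_implicant t c" "l \<in> t" shows "fst l \<in> vars c"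
proof (rule ccontr)
  assume nv: "fst l \<notin> vars c"
  obtain x0 b0 where l: "l = (x0, b0)" by (cases l)
  have imp: "implicant t c" using assms(1) unfolding prime_implicant_def by blast
  hence tt: "is_term t" unfolding implicant_def by blast
  have "implicant (t - {l}) c"
    unfolding implicant_def
  proof (intro conjI allI impI)
    show "is_term (t - {l})" by (rule term_subset[OF tt]) blast
    fix a assume sa: "sat_term a (t - {l})"
    define a' where "a' = a(x0 := b0)"
    have "sat_term a' t" unfolding sat_term_def
    proof (intro ballI, clarify)
      fix x b assume xb: "(x, b) \<in> t"
      show "a' x = b"
      proof (cases "x = x0")
        case True
        then have "b = b0" using xb assms(2) l tt unfolding is_term_def by (cases b; cases b0) auto
        then show ?thesis using True a'_def by simp
      next
        case False
        then have "(x,b) \<in> t - {l}" using xb l by auto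
        then show ?thesis using sa False a'_def unfolding sat_term_def by auto
      qed
    qed
    hence "eval c a'" using imp unfolding implicant_def by blast
    moreover have "eval c a' = eval c a" using nv l a'_def by (intro eval_agree) auto
    ultimately show "eval c a" by simp
  qed
  then show False using assms unfolding prime_implicant_def by blast
qed

lemma extend:
  assumes "is_term t" "sat_term a (restrict_term t X)"
  shows "\<exists>a'. sat_term a' t \<and> (\<forall>x\<in>X. a' x = a x)"
proof -
  define a' where "a' x = (if x \<in> X then a x else (x, True) \<in> t)" for x
  have "sat_term a' t" unfolding sat_term_def
  proof (intro ballI, clarify)
    fix x b assume xb: "(x, b) \<in> t"
    show "a' x = b"
    proof (cases "x \<in> X")
      case True
      then show ?thesis using xb assms(2) a'_def unfolding sat_term_def restrict_term_def by auto
    next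
      case False
      then show ?thesis using xb assms(1) a'_def unfolding is_term_def by (cases b) auto
    qed
  qed
  then show ?thesis using a'_def by auto
qed

lemma restrict_implicant:
  assumes "implicant t (And [u, w])" "c \<in> {u, w}"
  shows "implicant (restrict_term t (vars c)) c"
  unfolding implicant_def
proof (intro conjI allI impI)
  have tt: "is_term t" using assms unfolding implicant_def by blast
  then show "is_term (restrict_term t (vars c))" by (rule term_subset) (auto simp: restrict_term_def)
  fix a assume "sat_term a (restrict_term t (vars c))"
  then obtain a' where a': "sat_term a' t" "\<forall>x\<in>vars c. a' x = a x" using extend tt by blast
  have "eval (And [u, w]) a'" using a'(1) assms(1) unfolding implicant_def by blast
  hence "eval c a'" using assms(2) by auto
  moreover have "eval c a' = eval c a" using a'(2) by (rule eval_agree)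
  ultimately show "eval c a" by simp
qed

lemma prime_split:
  assumes "prime_implicant t (And [u, w])"
  shows "t = restrict_term t (vars u) \<union> restrict_term t (vars w)"
  using prime_vars[OF assms] unfolding restrict_term_def by auto

lemma restrict_prime_gen:
  assumes p: "prime_implicant t C" and ev: "\<And>a. eval C a = (eval c a \<and> eval c' a)"
    and disj: "vars c \<inter> vars c' = {}"
    and sp: "t = restrict_term t (vars c) \<union> restrict_term t (vars c')"
    and ri: "implicant (restrict_term t (vars c)) c"
    and ri2: "implicant (restrict_term t (vars c')) c'"
  shows "prime_implicant (restrict_term t (vars c)) c"
proof -
  have imp: "implicant t C" using p unfolding prime_implicant_def by blast
  have "\<not> implicant (restrict_term t (vars c) - {l}) c" if l: "l \<in> restrict_term t (vars c)" for l
  proof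
    assume h: "implicant (restrict_term t (vars c) - {l}) c"
    have tv: "fst x \<in> vars c \<union> vars c'" if "x \<in> t" for x
    proof -
      have "x \<in> restrict_term t (vars c) \<union> restrict_term t (vars c')"
        using that by (subst (asm) sp)
      then show ?thesis unfolding restrict_term_def by auto
    qed
    have eq: "t - {l} = (restrict_term t (vars c) - {l}) \<union> restrict_term t (vars c')"
      using l disj tv unfolding restrict_term_def by auto
    have "implicant (t - {l}) C"
      unfolding implicant_def
    proof (intro conjI allI impI)
      have "is_term t" using imp unfolding implicant_def by blast
      then show "is_term (t - {l})" by (rule term_subset) blast
      fix a assume sa: "sat_term a (t - {l})"
      have "sat_term a (restrict_term t (vars c) - {l})" "sat_term a (restrict_term t (vars c'))"
        using sa eq unfolding sat_term_def by auto
      hence "eval c a" "eval c' a" using h ri2 unfolding implicant_def by auto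
      then show "eval C a" using ev by simp
    qed
    moreover have "l \<in> t" using l unfolding restrict_term_def by auto
    ultimately show False using p unfolding prime_implicant_def by blast
  qed
  then show ?thesis using ri unfolding prime_implicant_def by blast
qed

lemma restrict_prime:
  assumes d: "decDNNF (And [u, w])" and p: "prime_implicant t (And [u, w])" and c: "c \<in> {u, w}"
  shows "prime_implicant (restrict_term t (vars c)) c"
proof -
  have disj: "vars u \<inter> vars w = {}" using disj_uw d by blast
  have imp: "implicant t (And [u, w])" using p unfolding prime_implicant_def by blast
  have r1: "implicant (restrict_term t (vars u)) u" using restrict_implicant[OF imp] by simp
  have r2: "implicant (restrict_term t (vars w)) w" using restrict_implicant[OF imp] by simp
  have sp: "t = restrict_term t (vars u) \<union> restrict_term t (vars w)" using prime_split[OF p] .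
  have ev: "\<And>a. eval (And [u, w]) a = (eval u a \<and> eval w a)" by simp
  have ev': "\<And>a. eval (And [u, w]) a = (eval w a \<and> eval u a)" by auto
  from c consider "c = u" | "c = w" by blast
  then show ?thesis
  proof cases
    case 1
    then show ?thesis using restrict_prime_gen[OF p ev disj sp r1 r2] by simp
  next
    case 2
    have disj': "vars w \<inter> vars u = {}" using disj by blast
    have sp': "t = restrict_term t (vars w) \<union> restrict_term t (vars u)" using sp by blast
    show ?thesis using restrict_prime_gen[OF p ev' disj' sp' r2 r1] 2 by simp
  qed
qed

lemma combine_prime:
  assumes d: "decDNNF (And [u, w])" and p: "prime_implicant p u" and q: "prime_implicant q w"
  shows "prime_implicant (p \<union> q) (And [u, w])
     \<and> restrict_term (p \<union> q) (vars u) = p \<and> restrict_term (p \<union> q) (vars w) = q"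
proof -
  have disj: "vars u \<inter> vars w = {}" using disj_uw d by blast
  have pv: "fst l \<in> vars u" if "l \<in> p" for l using prime_vars[OF p that] .
  have qv: "fst l \<in> vars w" if "l \<in> q" for l using prime_vars[OF q that] .
  have rp: "restrict_term (p \<union> q) (vars u) = p" using pv qv disj unfolding restrict_term_def by fastforce
  have rq: "restrict_term (p \<union> q) (vars w) = q" using pv qv disj unfolding restrict_term_def by fastforce
  have ip: "implicant p u" and iq: "implicant q w" using p q unfolding prime_implicant_def by auto
  have tpq: "is_term (p \<union> q)"
    using ip iq pv qv disj unfolding implicant_def is_term_def by (smt (verit) Un_iff disjoint_iff finite_UnI fst_conv)
  have imp: "implicant (p \<union> q) (And [u, w])"
    unfolding implicant_def
  proof (intro conjI allI impI)
    show "is_term (p \<union> q)" by (rule tpq)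
    fix a assume "sat_term a (p \<union> q)"
    hence "sat_term a p" "sat_term a q" unfolding sat_term_def by auto
    then show "eval (And [u, w]) a" using ip iq unfolding implicant_def by auto
  qed
  have "\<not> implicant (p \<union> q - {l}) (And [u, w])" if l: "l \<in> p \<union> q" for l
  proof
    assume h: "implicant (p \<union> q - {l}) (And [u, w])"
    show False
    proof (cases "l \<in> p")
      case True
      have "restrict_term (p \<union> q - {l}) (vars u) = p - {l}" using rp unfolding restrict_term_def by auto
      then have "implicant (p - {l}) u" using restrict_implicant[OF h, of u] by simp
      then show False using p True unfolding prime_implicant_def by blast
    next
      case False
      hence "l \<in> q" using l by auto
      have "restrict_term (p \<union> q - {l}) (vars w) = q - {l}" using rq unfolding restrict_term_def by auto
      then have "implicant (q - {l}) w" using restrict_implicant[OF h, of w] by simp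
      then show False using q \<open>l \<in> q\<close> unfolding prime_implicant_def by blast
    qed
  qed
  then show ?thesis using imp rp rq unfolding prime_implicant_def by blast
qed

lemma exists_prime:
  assumes "eval c a" shows "\<exists>t. prime_implicant t c"
proof -
  define T0 where "T0 = (\<lambda>x. (x, a x)) ` vars c"
  have fT0: "finite T0" unfolding T0_def using finite_vars by (rule finite_imageI)
  have tT0: "is_term T0" using fT0 unfolding is_term_def T0_def by auto
  have iT0: "implicant T0 c" unfolding implicant_def
  proof (intro conjI allI impI)
    show "is_term T0" by (rule tT0)
    fix b assume "sat_term b T0"
    hence "\<forall>x\<in>vars c. b x = a x" unfolding sat_term_def T0_def by auto
    then have "eval c b = eval c a" by (rule eval_agree)
    then show "eval c b" using assms by simp
  qed
  obtain t where t: "t \<subseteq> T0 \<and> implicant t c"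
    and mn: "\<And>s. s \<subseteq> T0 \<and> implicant s c \<Longrightarrow> card t \<le> card s"
    using ex_has_least_nat[of "\<lambda>s. s \<subseteq> T0 \<and> implicant s c" T0 card] iT0 by blast
  have "\<not> implicant (t - {l}) c" if "l \<in> t" for l
  proof
    assume "implicant (t - {l}) c"
    hence "card t \<le> card (t - {l})" using mn t by blast
    moreover have "finite t" using t fT0 finite_subset by blast
    ultimately show False using that card_Diff1_less[of t l] by linarith
  qed
  then show ?thesis using t unfolding prime_implicant_def by blast
qed

theorem proposition8:
  fixes u w :: "'v circuit" and S :: "'v term set"
  assumes "decDNNF (And [u, w])"
    and "S \<subseteq> IP (And [u, w])"
  shows "(\<lambda>t. restrict_term t (vars u)) ` S \<subseteq> IP u
       \<and> (\<lambda>t. restrict_term t (vars w)) ` S \<subseteq> IP w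
       \<and> ((\<exists>a. eval (And [u, w]) a) \<longrightarrow>
           (S = IP (And [u, w]) \<longleftrightarrow>
              ((\<lambda>t. restrict_term t (vars u)) ` S = IP u
             \<and> (\<lambda>t. restrict_term t (vars w)) ` S = IP w
             \<and> S = {tu \<union> tw | tu tw. tu \<in> (\<lambda>t. restrict_term t (vars u)) ` S
                                    \<and> tw \<in> (\<lambda>t. restrict_term t (vars w)) ` S})))"
proof -
  let ?Su = "(\<lambda>t. restrict_term t (vars u)) ` S"
  let ?Sw = "(\<lambda>t. restrict_term t (vars w)) ` S"
  have A: "?Su \<subseteq> IP u" using restrict_prime[OF assms(1)] assms(2) unfolding IP_def by blast
  have B: "?Sw \<subseteq> IP w" using restrict_prime[OF assms(1)] assms(2) unfolding IP_def by blast
  have C: "S = IP (And [u, w]) \<longleftrightarrow> (?Su = IP u \<and> ?Sw = IP w \<and> S = {tu \<union> tw | tu tw. tu \<in> ?Su \<and> tw \<in> ?Sw})"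
    if ev: "eval (And [u, w]) a" for a
  proof
    assume eq: "S = IP (And [u, w])"
    have "eval u a" "eval w a" using ev by auto
    then obtain p0 q0 where p0: "prime_implicant p0 u" and q0: "prime_implicant q0 w"
      using exists_prime by metis
    have "IP u \<subseteq> ?Su"
    proof
      fix p assume "p \<in> IP u"
      hence "p \<union> q0 \<in> S \<and> restrict_term (p \<union> q0) (vars u) = p"
        using combine_prime[OF assms(1) _ q0, of p] eq unfolding IP_def by auto
      then show "p \<in> ?Su" by force
    qed
    moreover have "IP w \<subseteq> ?Sw"
    proof
      fix q assume "q \<in> IP w"
      hence "p0 \<union> q \<in> S \<and> restrict_term (p0 \<union> q) (vars w) = q"
        using combine_prime[OF assms(1) p0, of q] eq unfolding IP_def by auto
      then show "q \<in> ?Sw" by force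
    qed
    ultimately have e1: "?Su = IP u" and e2: "?Sw = IP w" using A B by auto
    have "S \<subseteq> {tu \<union> tw | tu tw. tu \<in> ?Su \<and> tw \<in> ?Sw}"
    proof
      fix t assume "t \<in> S"
      then have "t \<in> IP (And [u, w])" using assms(2) by (rule subsetD[rotated])
      then have "t = restrict_term t (vars u) \<union> restrict_term t (vars w)"
        unfolding IP_def by (intro prime_split) simp
      moreover have "restrict_term t (vars u) \<in> ?Su" "restrict_term t (vars w) \<in> ?Sw"
        using \<open>t \<in> S\<close> by (rule imageI)+
      ultimately show "t \<in> {tu \<union> tw | tu tw. tu \<in> ?Su \<and> tw \<in> ?Sw}" by (intro CollectI exI conjI)
    qed
    moreover have "{tu \<union> tw | tu tw. tu \<in> ?Su \<and> tw \<in> ?Sw} \<subseteq> S"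
    proof
      fix x assume "x \<in> {tu \<union> tw | tu tw. tu \<in> ?Su \<and> tw \<in> ?Sw}"
      then obtain tu tw where x: "x = tu \<union> tw" and "tu \<in> ?Su" "tw \<in> ?Sw" by blast
      then have "tu \<in> IP u" "tw \<in> IP w" by (simp_all only: e1 e2)
      then have "prime_implicant (tu \<union> tw) (And [u, w])"
        using combine_prime[OF assms(1), of tu tw] unfolding IP_def by simp
      then show "x \<in> S" using x eq unfolding IP_def by simp
    qed
    ultimately have "S = {tu \<union> tw | tu tw. tu \<in> ?Su \<and> tw \<in> ?Sw}" by (rule equalityI)
    with e1 e2 show "?Su = IP u \<and> ?Sw = IP w \<and> S = {tu \<union> tw | tu tw. tu \<in> ?Su \<and> tw \<in> ?Sw}"
      by (intro conjI)
  next
    assume h: "?Su = IP u \<and> ?Sw = IP w \<and> S = {tu \<union> tw | tu tw. tu \<in> ?Su \<and> tw \<in> ?Sw}"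
    have "IP (And [u, w]) \<subseteq> S"
    proof
      fix t assume t: "t \<in> IP (And [u, w])"
      have h1: "?Su = IP u" using h by (rule conjunct1)
      have h2: "?Sw = IP w" using h by (rule conjunct1[OF conjunct2])
      have "restrict_term t (vars u) \<in> IP u" "restrict_term t (vars w) \<in> IP w"
        using restrict_prime[OF assms(1)] t unfolding IP_def by auto
      hence "restrict_term t (vars u) \<in> ?Su" "restrict_term t (vars w) \<in> ?Sw"
        by (simp_all only: h1 h2)
      moreover have "t = restrict_term t (vars u) \<union> restrict_term t (vars w)"
        using t unfolding IP_def by (intro prime_split) simp
      ultimately have "t \<in> {tu \<union> tw | tu tw. tu \<in> ?Su \<and> tw \<in> ?Sw}" by (intro CollectI exI conjI)
      have h3: "S = {tu \<union> tw | tu tw. tu \<in> ?Su \<and> tw \<in> ?Sw}" using h by (rule conjunct2[OF conjunct2])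
      show "t \<in> S" by (subst h3) (rule \<open>t \<in> {tu \<union> tw | tu tw. tu \<in> ?Su \<and> tw \<in> ?Sw}\<close>)
    qed
    then show "S = IP (And [u, w])" using assms(2) by blast
  qed
  show ?thesis
  proof (intro conjI impI)
    show "?Su \<subseteq> IP u" by (rule A)
    show "?Sw \<subseteq> IP w" by (rule B)
    assume "\<exists>a. eval (And [u, w]) a"
    then obtain a where "eval (And [u, w]) a" by blast
    then show "S = IP (And [u, w]) \<longleftrightarrow> (?Su = IP u \<and> ?Sw = IP w \<and> S = {tu \<union> tw | tu tw. tu \<in> ?Su \<and> tw \<in> ?Sw})"
      by (rule C)
  qed
qed

end
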